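(* Let $f:\mathbb{R}^d\to\mathbb{R}$ be twice differentiable and strictly pseudoconvex with global minimizer $x_*$, and suppose $f(x)=\psi(\|x-x_*\|)$ for a twice differentiable $\psi:[0,\infty)\to\mathbb{R}$. Let \[ g(x)\coloneqq f(x_* )+\int_0^1\frac{\langle\nabla f(x_*+t(x-x_* )),\,x-x_*\rangle}{t}\,dt . \] If $\psi''(r)+\frac{\psi'(r)}{r}\ge 0$ for $r\in[0,M]$, then $g$ is convex on $\mathcal N=\{x:\ \|x-x_*\|\le M\}$.
   Context: $f$ is strictly pseudoconvex if for all $x\neq y$, $f(y)\le f(x)\Rightarrow\langle\nabla f(x),y-x\rangle<0$. $\|\cdot\|$ is the Euclidean norm. *)

theory Defs
  imports "HOL-Analysis.Analysis"
begin

definition strictly_pseudoconvex :: "('a::real_inner \<Rightarrow> real) \<Rightarrow> ('a \<Rightarrow> 'a) \<Rightarrow> bool" where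
  "strictly_pseudoconvex f G \<longleftrightarrow>
     (\<forall>x y. x \<noteq> y \<longrightarrow> f y \<le> f x \<longrightarrow> G x \<bullet> (y - x) < 0)"

definition gfun :: "('a::real_inner \<Rightarrow> real) \<Rightarrow> ('a \<Rightarrow> 'a) \<Rightarrow> 'a \<Rightarrow> 'a \<Rightarrow> real" where
  "gfun f G xs x = f xs + integral {0..1} (\<lambda>t. (G (xs + t *\<^sub>R (x - xs)) \<bullet> (x - xs)) / t)"

end

theory Submission
  imports Defs
begin

lemma MVT_within:
  fixes f f' :: "real \<Rightarrow> real"
  assumes "a < b" and der: "\<And>x. x \<in> {a..b} \<Longrightarrow> (f has_real_derivative f' x) (at x within {a..b})"
  shows "\<exists>z. a < z \<and> z < b \<and> f b - f a = (b - a) * f' z"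
proof -
  have cont: "continuous_on {a..b} f"
    unfolding continuous_on_eq_continuous_within using der DERIV_continuous by blast
  have d: "(f has_real_derivative f' x) (at x)" if x: "a < x" "x < b" for x
  proof -
    have "at x within {a..b} = at x" by (rule at_within_Icc_at[OF x])
    then show ?thesis using der[of x] x by simp
  qed
  have "\<exists>l z. a < z \<and> z < b \<and> DERIV f z :> l \<and> f b - f a = (b - a) * l"
  proof (rule MVT[OF \<open>a < b\<close> cont])
    fix x assume "a < x" "x < b"
    then show "f differentiable (at x)" using d real_differentiable_def by blast
  qed
  then obtain l z where z: "a < z" "z < b" "DERIV f z :> l" "f b - f a = (b - a) * l"
    by blast
  have "l = f' z" using DERIV_unique[OF z(3) d[OF z(1,2)]] .
  then show ?thesis using z by blast
qed

lemma mono_from_deriv: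
  fixes f f' :: "real \<Rightarrow> real"
  assumes der: "\<And>x. x \<in> {a..b} \<Longrightarrow> (f has_real_derivative f' x) (at x within {a..b})"
    and nn: "\<And>x. x \<in> {a..b} \<Longrightarrow> f' x \<ge> 0"
    and xy: "a \<le> x" "x \<le> y" "y \<le> b"
  shows "f x \<le> f y"
proof (cases "x = y")
  case False
  then have "x < y" using xy by simp
  have "\<exists>z. x < z \<and> z < y \<and> f y - f x = (y - x) * f' z"
    by (rule MVT_within[OF \<open>x < y\<close>]) (use xy in \<open>auto intro: DERIV_subset[OF der]\<close>)
  then obtain z where "x < z" "z < y" "f y - f x = (y - x) * f' z" by blast
  moreover have "f' z \<ge> 0" using nn \<open>x < z\<close> \<open>z < y\<close> xy by auto
  ultimately show ?thesis using \<open>x < y\<close> by (smt (verit) mult_nonneg_nonneg)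
qed simp

lemma convex_from_deriv:
  fixes f f' :: "real \<Rightarrow> real"
  assumes der: "\<And>x. x \<in> {a..b} \<Longrightarrow> (f has_real_derivative f' x) (at x within {a..b})"
    and mono: "\<And>x y. x \<in> {a..b} \<Longrightarrow> y \<in> {a..b} \<Longrightarrow> x \<le> y \<Longrightarrow> f' x \<le> f' y"
  shows "convex_on {a..b} f"
proof (rule convex_on_linorderI)
  show "convex {a..b}" by simp
next
  fix t x y :: real
  assume t: "t > 0" "t < 1"
  assume xy: "x \<in> {a..b}" "y \<in> {a..b}" "x < y"
  define z where "z = (1 - t) * x + t * y"
  have ivl: "{x..y} \<subseteq> {a..b}" using xy by auto
  from xy t have xz: "z > x"
    by (simp add: z_def algebra_simps)
  have "y - z = (1 - t) * (y - x)"
    by (simp add: z_def algebra_simps)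
  also from xy t have "\<dots> > 0"
    by (intro mult_pos_pos) simp_all
  finally have yz: "z < y"
    by simp
  have "\<exists>\<xi>. x < \<xi> \<and> \<xi> < z \<and> f z - f x = (z - x) * f' \<xi>"
    by (rule MVT_within[OF xz]) (use xy yz ivl in \<open>auto intro!: DERIV_subset[OF der]\<close>)
  then obtain \<xi> where \<xi>: "\<xi> > x" "\<xi> < z" "f' \<xi> = (f z - f x) / (z - x)"
    using xz by (auto simp: field_simps)
  have "\<exists>\<eta>. z < \<eta> \<and> \<eta> < y \<and> f y - f z = (y - z) * f' \<eta>"
    by (rule MVT_within[OF yz]) (use xy xz ivl in \<open>auto intro!: DERIV_subset[OF der]\<close>)
  then obtain \<eta> where \<eta>: "\<eta> > z" "\<eta> < y" "f' \<eta> = (f y - f z) / (y - z)"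
    using yz by (auto simp: field_simps)
  from \<eta>(3) have "(f y - f z) / (y - z) = f' \<eta>" ..
  also from \<xi> \<eta> ivl have "\<xi> \<in> {a..b}" "\<eta> \<in> {a..b}"
    by auto
  with \<xi> \<eta> have "f' \<eta> \<ge> f' \<xi>"
    by (intro mono) auto
  also from \<xi>(3) have "f' \<xi> = (f z - f x) / (z - x)" .
  finally have "(f y - f z) * (z - x) \<ge> (f z - f x) * (y - z)"
    using xz yz by (simp add: field_simps)
  also have "z - x = t * (y - x)"
    by (simp add: z_def algebra_simps)
  also have "y - z = (1 - t) * (y - x)"
    by (simp add: z_def algebra_simps)
  finally have "(f y - f z) * t \<ge> (f z - f x) * (1 - t)"
    using xy by simp
  then show "(1 - t) * f x + t * f y \<ge> f ((1 - t) *\<^sub>R x + t *\<^sub>R y)"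
    by (simp add: z_def algebra_simps)
qed

lemma line_deriv:
  fixes f :: "'a::real_inner \<Rightarrow> real"
  assumes grad: "\<And>x. (f has_derivative (\<lambda>h. G x \<bullet> h)) (at x)"
  shows "((\<lambda>s. f (a + s *\<^sub>R v)) has_real_derivative (G (a + t *\<^sub>R v) \<bullet> v)) (at t)"
proof -
  have "((\<lambda>s. a + s *\<^sub>R v) has_derivative (\<lambda>h. h *\<^sub>R v)) (at t)"
    by (auto intro!: derivative_eq_intros)
  from has_derivative_compose[OF this grad]
  have "((\<lambda>s. f (a + s *\<^sub>R v)) has_derivative (\<lambda>h. G (a + t *\<^sub>R v) \<bullet> (h *\<^sub>R v))) (at t)" .
  moreover have "(\<lambda>h. G (a + t *\<^sub>R v) \<bullet> (h *\<^sub>R v)) = (*) (G (a + t *\<^sub>R v) \<bullet> v)"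
    by (auto simp: fun_eq_iff)
  ultimately show ?thesis by (simp add: has_field_derivative_def)
qed


theorem corollary4:
  fixes f :: "'a::euclidean_space \<Rightarrow> real"
    and G :: "'a \<Rightarrow> 'a"
    and xs :: 'a
    and \<psi> \<psi>' \<psi>'' :: "real \<Rightarrow> real"
    and M :: real
  assumes grad: "\<And>x. (f has_derivative (\<lambda>h. G x \<bullet> h)) (at x)"
    and twice: "\<And>x. G differentiable (at x)"
    and spc: "strictly_pseudoconvex f G"
    and minim: "\<And>x. f xs \<le> f x"
    and radial: "\<And>x. f x = \<psi> (norm (x - xs))"
    and d1: "\<And>r. r \<ge> 0 \<Longrightarrow> (\<psi> has_real_derivative \<psi>' r) (at r within {0..})"
    and d2: "\<And>r. r \<ge> 0 \<Longrightarrow> (\<psi>' has_real_derivative \<psi>'' r) (at r within {0..})"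
    and cond: "\<And>r. r \<in> {0..M} \<Longrightarrow> \<psi>'' r + \<psi>' r / r \<ge> 0"
  shows "convex_on (cball xs M) (gfun f G xs)"
proof (cases "M \<ge> 0")
  case False
  then have "cball xs M = {}" by auto
  then show ?thesis by (simp add: convex_on_def)
next
  case M: True
  define \<Phi> where "\<Phi> s = (if s = 0 then \<psi>'' 0 else \<psi>' s / s)" for s
  define P where "P u = integral {0..u} \<Phi>" for u
  define h where "h r = r * P r" for r
  define hd where "hd r = P r + \<psi>' r" for r

  obtain e :: 'a where e: "e \<in> Basis"
    using nonempty_Basis by blast
  then have ne: "norm e = 1" by simp
  have psi_line: "f (xs + s *\<^sub>R e) = \<psi> s" if "s \<ge> 0" for s
    using that ne by (simp add: radial)
  have D0: "((\<lambda>s. f (xs + s *\<^sub>R e)) has_real_derivative (G xs \<bullet> e)) (at 0)"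
    using line_deriv[OF grad, where a=xs and t=0 and v=e] by simp
  have Ge: "G xs \<bullet> e = 0"
    by (rule DERIV_local_min[OF D0, of 1]) (auto intro: minim)
  have "((\<lambda>s. f (xs + s *\<^sub>R e)) has_real_derivative 0) (at 0 within {0..})"
    using D0 unfolding Ge by (rule has_field_derivative_at_within)
  hence A1: "(\<psi> has_real_derivative 0) (at 0 within {0..})"
    by (rule has_field_derivative_transform_within[where d=1]) (auto simp: psi_line)
  have A2: "(\<psi> has_real_derivative \<psi>' 0) (at 0 within {0..})" using d1 by simp
  have L1: "((\<lambda>y. (\<psi> y - \<psi> 0) / (y - 0)) \<longlongrightarrow> 0) (at_right 0)"
    using A1 unfolding has_field_derivative_iff at_within_Ici_at_right .
  have L2: "((\<lambda>y. (\<psi> y - \<psi> 0) / (y - 0)) \<longlongrightarrow> \<psi>' 0) (at_right 0)"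
    using A2 unfolding has_field_derivative_iff at_within_Ici_at_right .
  have psi0: "\<psi>' 0 = 0"
    by (rule tendsto_unique[OF _ L2 L1]) simp

  have Gline: "G (xs + t *\<^sub>R v) \<bullet> v = \<psi>' (t * norm v) * norm v" if t: "t > 0" for t v
  proof (cases "v = 0")
    case True then show ?thesis by simp
  next
    case False
    have r: "norm v > 0" using False by simp
    have A: "((\<lambda>s. f (xs + s *\<^sub>R v)) has_real_derivative (G (xs + t *\<^sub>R v) \<bullet> v)) (at t)"
      by (rule line_deriv[OF grad])
    have B1: "(\<psi> has_real_derivative \<psi>' (t * norm v)) (at (t * norm v))"
    proof -
      have "t * norm v \<in> interior {0..}" using t r by simp
      then show ?thesis using d1[of "t * norm v"] t r at_within_interior by fastforce
    qed
    have B0: "((\<lambda>s. s * norm v) has_real_derivative norm v) (at t)"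
      by (auto intro!: derivative_eq_intros)
    have B: "((\<lambda>s. \<psi> (s * norm v)) has_real_derivative \<psi>' (t * norm v) * norm v) (at t)"
      using DERIV_chain2[OF B1 B0] by simp
    have "((\<lambda>s. f (xs + s *\<^sub>R v)) has_real_derivative \<psi>' (t * norm v) * norm v) (at t)"
      by (rule has_field_derivative_transform_within_open[OF B, of "{0<..}"])
         (use t in \<open>auto simp: radial\<close>)
    then show ?thesis using A DERIV_unique by metis
  qed

  have psi'_cont: "continuous (at s within {0..}) \<psi>'" if "s \<ge> 0" for s
    using d2[OF that] DERIV_continuous by blast
  have Phi_cont: "continuous_on {0..M} \<Phi>"
    unfolding continuous_on_eq_continuous_within
  proof
    fix x :: real assume x: "x \<in> {0..M}"
    have "(\<Phi> \<longlongrightarrow> \<Phi> x) (at x within {0..})"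
    proof (cases "x = 0")
      case True
      have "((\<lambda>y. (\<psi>' y - \<psi>' 0) / (y - 0)) \<longlongrightarrow> \<psi>'' 0) (at 0 within {0..})"
        using d2[of 0] by (simp add: has_field_derivative_iff)
      then have L: "((\<lambda>y. \<psi>' y / y) \<longlongrightarrow> \<psi>'' 0) (at 0 within {0..})" by (simp add: psi0)
      have "eventually (\<lambda>y. \<psi>' y / y = \<Phi> y) (at 0 within {0..})"
        by (simp add: eventually_at_filter \<Phi>_def)
      then show ?thesis using L True tendsto_cong by (fastforce simp: \<Phi>_def)
    next
      case False
      then have xp: "x > 0" using x by simp
      have "((\<lambda>y. \<psi>' y / y) \<longlongrightarrow> \<psi>' x / x) (at x within {0..})"
        using psi'_cont[of x] xp by (intro tendsto_intros) (auto simp: continuous_within)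
      moreover have "eventually (\<lambda>y. \<psi>' y / y = \<Phi> y) (at x within {0..})"
        unfolding eventually_at using xp
        by (intro exI[of _ x]) (auto simp: \<Phi>_def dist_real_def)
      ultimately show ?thesis using tendsto_cong xp by (fastforce simp: \<Phi>_def)
    qed
    then show "continuous (at x within {0..M}) \<Phi>"
      unfolding continuous_within by (rule tendsto_within_subset) auto
  qed
  have Pder: "(P has_real_derivative \<Phi> u) (at u within {0..M})" if "u \<in> {0..M}" for u
    unfolding P_def by (rule integral_has_real_derivative[OF Phi_cont that])
  have P0: "P 0 = 0" by (simp add: P_def)
  have rPhi: "r * \<Phi> r = \<psi>' r" for r
    by (simp add: \<Phi>_def psi0)

  have gform: "gfun f G xs x = f xs + h (norm (x - xs))" if x: "x \<in> cball xs M" for x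
  proof -
    define v where "v = x - xs"
    define r where "r = norm v"
    have rM: "0 \<le> r" "r \<le> M" using x by (auto simp: r_def v_def dist_norm norm_minus_commute)
    have FT: "((\<lambda>t. r * (r * \<Phi> (t * r))) has_integral (r * P (1 * r) - r * P (0 * r))) {0..1}"
    proof (rule fundamental_theorem_of_calculus)
      show "(0::real) \<le> 1" by simp
      fix t :: real assume t: "t \<in> {0..1}"
      have tr: "t * r \<in> {0..M}" using t rM mult_left_le_one_le[of r t] by auto
      have "(P has_real_derivative \<Phi> (t * r)) (at ((\<lambda>s. s * r) t) within (\<lambda>s. s * r) ` {0..1})"
        using Pder[OF tr] proof (rule DERIV_subset)
          show "(\<lambda>s. s * r) ` {0..1} \<subseteq> {0..M}"
          proof
            fix w assume "w \<in> (\<lambda>s. s * r) ` {0..1}"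
            then obtain s where s: "s \<in> {0..1}" "w = s * r" by auto
            then have "s * r \<le> r" using rM mult_left_le_one_le[of r s] by auto
            then show "w \<in> {0..M}" using s rM by auto
          qed
        qed
      moreover have "((\<lambda>s. s * r) has_real_derivative r) (at t within {0..1})"
        using DERIV_cmult_right[OF DERIV_ident, where c=r] by simp
      ultimately have "(P \<circ> (\<lambda>s. s * r) has_real_derivative \<Phi> (t * r) * r) (at t within {0..1})"
        by (rule DERIV_image_chain)
      then have "((\<lambda>s. r * P (s * r)) has_real_derivative r * (\<Phi> (t * r) * r)) (at t within {0..1})"
        by (auto intro!: DERIV_cmult simp: o_def)
      then show "((\<lambda>s. r * P (s * r)) has_vector_derivative r * (r * \<Phi> (t * r))) (at t within {0..1})"
        by (simp add: has_real_derivative_iff_has_vector_derivative[symmetric] algebra_simps)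
    qed
    have FT': "((\<lambda>t. r * (r * \<Phi> (t * r))) has_integral h r) {0..1}"
      using FT by (simp add: h_def P0)
    have "((\<lambda>t. G (xs + t *\<^sub>R v) \<bullet> v / t) has_integral h r) {0..1}"
    proof (rule has_integral_spike_finite_eq[of "{0}", THEN iffD1, OF _ _ FT'])
      show "finite {0::real}" by simp
      fix t assume t: "t \<in> {0..1} - {0::real}"
      then have tp: "t > 0" by auto
      show "G (xs + t *\<^sub>R v) \<bullet> v / t = r * (r * \<Phi> (t * r))"
      proof (cases "r = 0")
        case True
        then have "v = 0" by (simp add: r_def)
        then show ?thesis using True by simp
      next
        case False
        have tr0: "t * r \<noteq> 0" using False tp by simp
        have e1: "\<Phi> (t * r) = \<psi>' (t * r) / (t * r)" using tr0 by (simp add: \<Phi>_def)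
        have e2: "G (xs + t *\<^sub>R v) \<bullet> v = \<psi>' (t * r) * r" using Gline[OF tp, of v] by (simp add: r_def)
        show ?thesis unfolding e1 e2 using False tp by (simp add: field_simps power2_eq_square)
      qed
    qed
    then have "integral {0..1} (\<lambda>t. G (xs + t *\<^sub>R v) \<bullet> v / t) = h r"
      by (rule integral_unique)
    then show ?thesis
      unfolding gfun_def v_def r_def by simp
  qed

  have hder: "(h has_real_derivative hd r) (at r within {0..M})" if r: "r \<in> {0..M}" for r
  proof -
    have "((\<lambda>r. r * P r) has_real_derivative r * \<Phi> r + 1 * P r) (at r within {0..M})"
      by (rule DERIV_mult'[OF DERIV_ident Pder[OF r]])
    then show ?thesis unfolding h_def[abs_def] by (simp add: hd_def rPhi add.commute)
  qed
  have hdder: "(hd has_real_derivative \<Phi> r + \<psi>'' r) (at r within {0..M})" if r: "r \<in> {0..M}" for r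
  proof -
    have "(\<psi>' has_real_derivative \<psi>'' r) (at r within {0..M})"
      by (rule DERIV_subset[OF d2]) (use r in auto)
    then show ?thesis unfolding hd_def[abs_def] by (rule DERIV_add[OF Pder[OF r]])
  qed
  have hdnn: "\<Phi> r + \<psi>'' r \<ge> 0" if r: "r \<in> {0..M}" for r
  proof (cases "r = 0")
    case True
    then show ?thesis using cond[of 0] M by (simp add: \<Phi>_def)
  next
    case False
    then show ?thesis using cond[OF r] by (simp add: \<Phi>_def add.commute)
  qed
  have hdmono: "hd x \<le> hd y" if "x \<in> {0..M}" "y \<in> {0..M}" "x \<le> y" for x y
    apply (rule mono_from_deriv[where a=0 and b=M and f=hd and f'="\<lambda>r. \<Phi> r + \<psi>'' r"])
    apply (erule hdder)
    apply (erule hdnn)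
    using that apply auto
    done
  have hd0: "hd 0 = 0" by (simp add: hd_def P0 psi0)
  have hmono: "h x \<le> h y" if "x \<in> {0..M}" "y \<in> {0..M}" "x \<le> y" for x y
    apply (rule mono_from_deriv[where a=0 and b=M and f=h and f'=hd])
    apply (erule hder)
    subgoal for z using hdmono[of 0 z] hd0 M by auto
    using that apply auto
    done
  have hconv: "convex_on {0..M} h"
    by (rule convex_from_deriv[OF hder hdmono])

  show ?thesis
  proof (rule convex_onI)
    show "convex (cball xs M)" by simp
    fix u :: real and x y assume u: "0 < u" "u < 1" and x: "x \<in> cball xs M" and y: "y \<in> cball xs M"
    define z where "z = (1 - u) *\<^sub>R x + u *\<^sub>R y"
    have z: "z \<in> cball xs M"
      unfolding z_def using u x y by (intro convexD[OF convex_cball]) auto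
    define a where "a = norm (x - xs)"
    define b where "b = norm (y - xs)"
    have ab: "a \<in> {0..M}" "b \<in> {0..M}"
      using x y by (auto simp: a_def b_def dist_norm norm_minus_commute)
    have "z - xs = (1 - u) *\<^sub>R (x - xs) + u *\<^sub>R (y - xs)"
      by (simp add: z_def algebra_simps)
    then have "norm (z - xs) \<le> (1 - u) * a + u * b"
      using u norm_triangle_ineq[of "(1 - u) *\<^sub>R (x - xs)" "u *\<^sub>R (y - xs)"]
      by (simp add: a_def b_def)
    moreover have c: "(1 - u) * a + u * b \<in> {0..M}"
      using convexD[OF convex_real_interval(5), of a 0 M b "1 - u" u] ab u by auto
    moreover have "norm (z - xs) \<in> {0..M}"
      using z by (auto simp: dist_norm norm_minus_commute)
    ultimately have "h (norm (z - xs)) \<le> h ((1 - u) * a + u * b)"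
      by (intro hmono) auto
    also have "\<dots> \<le> (1 - u) * h a + u * h b"
      using convex_onD[OF hconv, of u a b] u ab by simp
    finally have "h (norm (z - xs)) \<le> (1 - u) * h a + u * h b" .
    show "gfun f G xs z \<le> (1 - u) * gfun f G xs x + u * gfun f G xs y"
    proof -
      have e: "(1 - u) * (f xs + h a) + u * (f xs + h b) = f xs + ((1 - u) * h a + u * h b)"
        by (simp add: algebra_simps)
      show ?thesis
        unfolding gform[OF z] gform[OF x] gform[OF y] a_def[symmetric] b_def[symmetric] e
        using \<open>h (norm (z - xs)) \<le> (1 - u) * h a + u * h b\<close> by linarith
    qed
  qed
qed

end
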